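(* Let $B>0$ and let $\phi\in L^2(\mathbb{R})$ be such that $\mathcal{A}\phi(x,0)\neq0$ for every $x\in[-2B,2B]$. Then for all $f,g\in L^2(\mathbb{R})$ vanishing almost everywhere outside $[-B,B]$, the following are equivalent: (1) $f=e^{i\alpha}g$ for some $\alpha\in\mathbb{R}$; (2) $|\mathcal{V}_\phi f(x,\omega)|=|\mathcal{V}_\phi g(x,\omega)|$ for all $x,\omega\in\mathbb{R}$.
   Context: For $f,\phi\in L^2(\mathbb{R})$ the short-time Fourier transform is $\mathcal{V}_\phi f(x,\omega)=\int_{\mathbb{R}} f(t)\overline{\phi(t-x)}e^{-2\pi i t\omega}\,dt$, and the ambiguity function of $f\in L^2(\mathbb{R})$ is $\mathcal{A}f(x,\omega):=e^{\pi i x\omega}\mathcal{V}_f f(x,\omega)$, for $x,\omega\in\mathbb{R}$. *)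

theory Defs
  imports "HOL-Analysis.Analysis"
begin

definition L2 :: "(real \<Rightarrow> complex) \<Rightarrow> bool" where
  "L2 f \<longleftrightarrow> f \<in> borel_measurable lborel \<and> integrable lborel (\<lambda>t. (cmod (f t))\<^sup>2)"

definition STFT :: "(real \<Rightarrow> complex) \<Rightarrow> (real \<Rightarrow> complex) \<Rightarrow> real \<Rightarrow> real \<Rightarrow> complex" where
  "STFT \<phi> f x \<omega> = (LINT t|lborel. f t * cnj (\<phi> (t - x)) * exp (- 2 * pi * \<i> * complex_of_real (t * \<omega>)))"

definition ambiguity :: "(real \<Rightarrow> complex) \<Rightarrow> real \<Rightarrow> real \<Rightarrow> complex" where
  "ambiguity f x \<omega> = exp (pi * \<i> * complex_of_real (x * \<omega>)) * STFT f f x \<omega>"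

end

theory Submission
  imports Defs "HOL-Probability.Levy" "HOL-Complex_Analysis.Conformal_Mappings"
begin


lemma fourier_unique_real:
  fixes h :: "real \<Rightarrow> real"
  assumes h: "integrable lborel h" and F: "\<And>\<omega>. (\<integral>t. h t *\<^sub>R iexp (\<omega> * t) \<partial>lborel) = 0"
  shows "AE t in lborel. h t = 0"
proof -
  define p where "p = (\<lambda>t. max (h t) 0)"
  define q where "q = (\<lambda>t. max (- h t) 0)"
  have hm[measurable]: "h \<in> borel_measurable borel" using h by auto
  have pi: "integrable lborel p" unfolding p_def using h by (intro integrable_max) auto
  have qi: "integrable lborel q" unfolding q_def using h by (intro integrable_max) auto
  have [measurable]: "p \<in> borel_measurable borel" "q \<in> borel_measurable borel" unfolding p_def q_def by auto
  have hpq: "h t = p t - q t" for t unfolding p_def q_def by auto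
  have pq0: "p t \<ge> 0" "q t \<ge> 0" for t unfolding p_def q_def by auto
  have ie: "integrable lborel (\<lambda>t. g t *\<^sub>R iexp (\<omega> * t))" if "integrable lborel g" for g \<omega>
    by (rule Bochner_Integration.integrable_bound[OF that]) (use that in \<open>auto simp: norm_exp_i_times\<close>)
  have Feq: "(\<integral>t. p t *\<^sub>R iexp (\<omega> * t) \<partial>lborel) = (\<integral>t. q t *\<^sub>R iexp (\<omega> * t) \<partial>lborel)" for \<omega>
  proof -
    have "(\<integral>t. p t *\<^sub>R iexp (\<omega> * t) \<partial>lborel) - (\<integral>t. q t *\<^sub>R iexp (\<omega> * t) \<partial>lborel)
      = (\<integral>t. h t *\<^sub>R iexp (\<omega> * t) \<partial>lborel)"
      by (subst Bochner_Integration.integral_diff[OF ie[OF pi] ie[OF qi], symmetric]) (auto intro!: Bochner_Integration.integral_cong simp: hpq algebra_simps)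
    then show ?thesis using F by simp
  qed
  define m where "m = integral\<^sup>L lborel p"
  have "complex_of_real m = complex_of_real (integral\<^sup>L lborel q)"
    using Feq[of 0] by (simp add: m_def pi qi)
  then have mq: "integral\<^sup>L lborel q = m" by simp
  have m0: "m \<ge> 0" unfolding m_def by (rule integral_nonneg_AE) (simp add: pq0)
  have "AE t in lborel. p t = q t"
  proof (cases "m = 0")
    case True
    have "AE t in lborel. p t = 0" using True pi pq0 unfolding m_def
      by (subst integral_nonneg_eq_0_iff_AE[symmetric]) auto
    moreover have "AE t in lborel. q t = 0" using True qi pq0 mq
      by (subst integral_nonneg_eq_0_iff_AE[symmetric]) auto
    ultimately show ?thesis by auto
  next
    case False
    then have mpos: "m > 0" using m0 by simp
    have rd: "real_distribution (density lborel (\<lambda>t. ennreal (g t / m)))"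
      if gi: "integrable lborel g" and g0: "\<And>t. g t \<ge> 0" and gm: "integral\<^sup>L lborel g = m" for g
    proof -
      have [measurable]: "g \<in> borel_measurable borel" using gi by auto
      have "emeasure (density lborel (\<lambda>t. ennreal (g t / m))) UNIV = (\<integral>\<^sup>+t. ennreal (g t / m) \<partial>lborel)"
        by (subst emeasure_density) auto
      also have "\<dots> = ennreal (integral\<^sup>L lborel (\<lambda>t. g t / m))"
        by (rule nn_integral_eq_integral) (auto intro!: gi AE_I2 divide_nonneg_pos g0 mpos)
      also have "\<dots> = 1" using gm mpos by simp
      finally have "prob_space (density lborel (\<lambda>t. ennreal (g t / m)))"
        by (intro prob_spaceI) simp
      then show ?thesis unfolding real_distribution_def real_distribution_axioms_def by simp
    qed
    have ch: "char (density lborel (\<lambda>t. ennreal (g t / m))) \<omega> = (\<integral>t. g t *\<^sub>R iexp (\<omega> * t) \<partial>lborel) / m"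
      if gi: "integrable lborel g" and g0: "\<And>t. g t \<ge> 0" for g \<omega>
    proof -
      have [measurable]: "g \<in> borel_measurable borel" using gi by auto
      have "char (density lborel (\<lambda>t. ennreal (g t / m))) \<omega> = (\<integral>t. (g t / m) *\<^sub>R iexp (\<omega> * t) \<partial>lborel)"
        unfolding char_def by (subst integral_density) (auto simp: g0 mpos less_imp_le)
      also have "\<dots> = (\<integral>t. (1/m) *\<^sub>R (g t *\<^sub>R iexp (\<omega> * t)) \<partial>lborel)" by simp
      also have "\<dots> = (1/m) *\<^sub>R (\<integral>t. g t *\<^sub>R iexp (\<omega> * t) \<partial>lborel)"
        by (rule integral_scaleR_right)
      finally show ?thesis by (simp add: divide_inverse scaleR_conv_of_real mult.commute)
    qed
    have "density lborel (\<lambda>t. ennreal (p t / m)) = density lborel (\<lambda>t. ennreal (q t / m))"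
      by (rule Levy_uniqueness[OF rd[OF pi pq0(1) m_def[symmetric]] rd[OF qi pq0(2) mq]])
        (rule ext, simp only: ch[OF pi pq0(1)] ch[OF qi pq0(2)] Feq)
    then have "AE t in lborel. ennreal (p t / m) = ennreal (q t / m)"
      by (intro sigma_finite_measure.density_unique[OF sigma_finite_lborel]) auto
    then show ?thesis by eventually_elim (use mpos in \<open>auto simp: pq0 ennreal_inj divide_nonneg_pos\<close>)
  qed
  then show ?thesis by eventually_elim (simp add: hpq)
qed

lemma fourier_unique:
  fixes k :: "real \<Rightarrow> complex"
  assumes k: "integrable lborel k" and F: "\<And>\<omega>. (\<integral>t. k t * iexp (\<omega> * t) \<partial>lborel) = 0"
  shows "AE t in lborel. k t = 0"
proof -
  have km[measurable]: "k \<in> borel_measurable borel" using k by auto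
  have ie: "integrable lborel (\<lambda>t. k t * iexp (\<omega> * t))" for \<omega>
    by (rule Bochner_Integration.integrable_bound[OF k]) (auto simp: norm_mult norm_exp_i_times)
  have ic: "integrable lborel (\<lambda>t. cnj (k t * iexp (\<omega> * t)))" for \<omega>
    by (rule integrable_cnj[OF ie])
  have cj: "cnj (iexp x) = iexp (- x)" for x by (simp add: exp_cnj)
  have re: "of_real (Re w) * z = (w * z + cnj (w * cnj z)) / 2" for w z :: complex
  proof -
    have "w * z + cnj (w * cnj z) = (w + cnj w) * z" by (simp add: algebra_simps)
    also have "\<dots> = 2 * of_real (Re w) * z" by (simp add: complex_add_cnj)
    finally show ?thesis by simp
  qed
  have im: "of_real (Im w) * z = (w * z - cnj (w * cnj z)) / (2 * \<i>)" for w z :: complex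
  proof -
    have "w * z - cnj (w * cnj z) = (w - cnj w) * z" by (simp add: algebra_simps)
    also have "\<dots> = 2 * \<i> * of_real (Im w) * z" by (simp add: complex_diff_cnj)
    finally show ?thesis by simp
  qed
  have "AE t in lborel. Re (k t) = 0"
  proof (rule fourier_unique_real)
    show "integrable lborel (\<lambda>t. Re (k t))" using k by auto
    fix \<omega>
    have "(\<integral>t. Re (k t) *\<^sub>R iexp (\<omega> * t) \<partial>lborel)
        = (\<integral>t. (k t * iexp (\<omega> * t) + cnj (k t * iexp (- \<omega> * t))) / 2 \<partial>lborel)"
    proof (rule Bochner_Integration.integral_cong[OF refl])
      fix t show "Re (k t) *\<^sub>R iexp (\<omega> * t) = (k t * iexp (\<omega> * t) + cnj (k t * iexp (- \<omega> * t))) / 2"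
        using re[of "k t" "iexp (\<omega> * t)"] by (simp only: scaleR_conv_of_real cj minus_mult_left)
    qed
    also have "\<dots> = ((\<integral>t. k t * iexp (\<omega> * t) \<partial>lborel) + cnj (\<integral>t. k t * iexp (- \<omega> * t) \<partial>lborel)) / 2"
      by (simp only: integral_divide_zero Bochner_Integration.integral_add[OF ie ic] Bochner_Integration.integral_cnj)
    also have "\<dots> = 0" using F[of \<omega>] F[of "-\<omega>"] by simp
    finally show "(\<integral>t. Re (k t) *\<^sub>R iexp (\<omega> * t) \<partial>lborel) = 0" .
  qed
  moreover have "AE t in lborel. Im (k t) = 0"
  proof (rule fourier_unique_real)
    show "integrable lborel (\<lambda>t. Im (k t))" using k by auto
    fix \<omega>
    have "(\<integral>t. Im (k t) *\<^sub>R iexp (\<omega> * t) \<partial>lborel)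
        = (\<integral>t. (k t * iexp (\<omega> * t) - cnj (k t * iexp (- \<omega> * t))) / (2 * \<i>) \<partial>lborel)"
    proof (rule Bochner_Integration.integral_cong[OF refl])
      fix t show "Im (k t) *\<^sub>R iexp (\<omega> * t) = (k t * iexp (\<omega> * t) - cnj (k t * iexp (- \<omega> * t))) / (2 * \<i>)"
        using im[of "k t" "iexp (\<omega> * t)"] by (simp only: scaleR_conv_of_real cj minus_mult_left)
    qed
    also have "\<dots> = ((\<integral>t. k t * iexp (\<omega> * t) \<partial>lborel) - cnj (\<integral>t. k t * iexp (- \<omega> * t) \<partial>lborel)) / (2 * \<i>)"
      by (simp only: integral_divide_zero Bochner_Integration.integral_diff[OF ie ic] Bochner_Integration.integral_cnj)
    also have "\<dots> = 0" using F[of \<omega>] F[of "-\<omega>"] by simp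
    finally show "(\<integral>t. Im (k t) *\<^sub>R iexp (\<omega> * t) \<partial>lborel) = 0" .
  qed
  ultimately show ?thesis by eventually_elim (simp add: complex_eq_iff)
qed

lemma cnj_measurable[measurable (raw)]:
  "f \<in> borel_measurable M \<Longrightarrow> (\<lambda>x. cnj (f x)) \<in> borel_measurable M"
  by (rule borel_measurable_continuous_on[where f=cnj]) (auto intro: continuous_intros)

definition E2 :: "real \<Rightarrow> real \<Rightarrow> complex" where
  "E2 t \<omega> = exp (- 2 * pi * \<i> * complex_of_real (t * \<omega>))"

lemma E2_measurable[measurable (raw)]:
  "f \<in> borel_measurable M \<Longrightarrow> g \<in> borel_measurable M \<Longrightarrow> (\<lambda>x. E2 (f x) (g x)) \<in> borel_measurable M"
  unfolding E2_def by measurable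

lemma norm_E2[simp]: "norm (E2 t \<omega>) = 1"
proof -
  have "- 2 * pi * \<i> * complex_of_real (t * \<omega>) = \<i> * complex_of_real (- 2 * pi * t * \<omega>)" by simp
  then show ?thesis unfolding E2_def by (simp only: norm_exp_i_times)
qed

lemma E2_iexp: "E2 t \<omega> = iexp ((- 2 * pi * \<omega>) * t)"
  unfolding E2_def by (simp add: algebra_simps)

lemma E2_add: "E2 (a + b) \<omega> = E2 a \<omega> * E2 b \<omega>"
  unfolding E2_def by (simp add: exp_add[symmetric] algebra_simps)

lemma cnj_E2: "cnj (E2 t \<omega>) = E2 (- t) \<omega>"
  unfolding E2_def by (simp add: exp_cnj)

lemma E2_0[simp]: "E2 t 0 = 1" unfolding E2_def by simp

lemma fourier_unique_E2:
  fixes k :: "real \<Rightarrow> complex"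
  assumes k: "integrable lborel k" and F: "\<And>\<omega>. (\<integral>t. k t * E2 t \<omega> \<partial>lborel) = 0"
  shows "AE t in lborel. k t = 0"
proof (rule fourier_unique[OF k])
  fix \<omega>
  have "E2 t (- \<omega> / (2 * pi)) = iexp (\<omega> * t)" for t
    unfolding E2_iexp by simp
  then show "(\<integral>t. k t * iexp (\<omega> * t) \<partial>lborel) = 0" using F[of "- \<omega> / (2 * pi)"] by simp
qed

lemma integrable_mult_E2:
  fixes h :: "real \<Rightarrow> complex"
  assumes "integrable lborel h" "a \<in> borel_measurable borel" "b \<in> borel_measurable borel"
  shows "integrable lborel (\<lambda>t. h t * E2 (a t) (b t))"
  by (rule Bochner_Integration.integrable_bound[OF assms(1)]) (use assms in \<open>auto simp: norm_mult\<close>)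

lemma integrable_shift:
  fixes h :: "real \<Rightarrow> complex"
  assumes "integrable lborel h"
  shows "integrable lborel (\<lambda>x. h (u + x))" "integrable lborel (\<lambda>x. h (u - x))"
  using lborel_integrable_real_affine[OF assms, of 1 u] lborel_integrable_real_affine[OF assms, of "-1" u]
  by auto

lemma integral_shift:
  fixes h :: "real \<Rightarrow> complex"
  shows "(\<integral>x. h (u + x) \<partial>lborel) = integral\<^sup>L lborel h" "(\<integral>x. h (u - x) \<partial>lborel) = integral\<^sup>L lborel h"
  using lborel_integral_real_affine[of 1 h u] lborel_integral_real_affine[of "-1" h u]
  by auto

lemma integral_shift_real:
  fixes h :: "real \<Rightarrow> real"
  shows "(\<integral>x. h (u + x) \<partial>lborel) = integral\<^sup>L lborel h" "(\<integral>x. h (u - x) \<partial>lborel) = integral\<^sup>L lborel h"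
  using lborel_integral_real_affine[of 1 h u] lborel_integral_real_affine[of "-1" h u]
  by auto

definition acorr :: "(real \<Rightarrow> complex) \<Rightarrow> real \<Rightarrow> complex" where
  "acorr h s = (\<integral>u. h (u + s) * cnj (h u) \<partial>lborel)"

lemma acorr_prod_integrable:
  fixes h :: "real \<Rightarrow> complex"
  assumes h: "integrable lborel h"
  shows "integrable (lborel \<Otimes>\<^sub>M lborel) (\<lambda>(u, s). h (u + s) * cnj (h u))"
proof -
  have [measurable]: "h \<in> borel_measurable borel" using h by auto
  show ?thesis
  proof (rule lborel_pair.Fubini_integrable)
    show "(\<lambda>(u, s). h (u + s) * cnj (h u)) \<in> borel_measurable (lborel \<Otimes>\<^sub>M lborel)" by measurable
    have "(\<integral>s. norm (case (u, s) of (u, s) \<Rightarrow> h (u + s) * cnj (h u)) \<partial>lborel) = norm (h u) * (\<integral>s. norm (h s) \<partial>lborel)" for u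
    proof -
      have "(\<integral>s. norm (case (u, s) of (u, s) \<Rightarrow> h (u + s) * cnj (h u)) \<partial>lborel) = (\<integral>s. norm (h (u + s)) * norm (h u) \<partial>lborel)"
        by (simp add: norm_mult)
      also have "\<dots> = (\<integral>s. norm (h (u + s)) \<partial>lborel) * norm (h u)" by simp
      also have "(\<integral>s. norm (h (u + s)) \<partial>lborel) = (\<integral>s. norm (h s) \<partial>lborel)"
        using integral_shift_real(1)[of "\<lambda>s. norm (h s)" u] by simp
      finally show ?thesis by simp
    qed
    then show "integrable lborel (\<lambda>u. \<integral>s. norm (case (u, s) of (u, s) \<Rightarrow> h (u + s) * cnj (h u)) \<partial>lborel)"
      using h by (simp del: norm_mult)
    show "AE u in lborel. integrable lborel (\<lambda>s. case (u, s) of (u, s) \<Rightarrow> h (u + s) * cnj (h u))"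
      using integrable_shift(1)[OF h] by simp
  qed
qed

lemma acorr_integrable:
  assumes h: "integrable lborel h"
  shows "integrable lborel (acorr h)"
proof -
  have "integrable (lborel \<Otimes>\<^sub>M lborel) (\<lambda>(s, u). h (u + s) * cnj (h u))"
    using lborel_pair.integrable_product_swap[OF acorr_prod_integrable[OF h]] by (simp add: case_prod_beta)
  from lborel_pair.integrable_fst'[OF this] show ?thesis unfolding acorr_def by simp
qed

lemma acorr_fourier:
  fixes h :: "real \<Rightarrow> complex"
  assumes h: "integrable lborel h"
  shows "(\<integral>s. acorr h s * E2 s \<omega> \<partial>lborel) = (\<integral>t. h t * E2 t \<omega> \<partial>lborel) * cnj (\<integral>t. h t * E2 t \<omega> \<partial>lborel)"
proof -
  have [measurable]: "h \<in> borel_measurable borel" using h by auto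
  have int: "integrable (lborel \<Otimes>\<^sub>M lborel) (\<lambda>(u, s). h (u + s) * cnj (h u) * E2 s \<omega>)"
    by (rule Bochner_Integration.integrable_bound[OF acorr_prod_integrable[OF h]]) (auto simp: norm_mult)
  have "(\<integral>s. acorr h s * E2 s \<omega> \<partial>lborel) = (\<integral>s. \<integral>u. h (u + s) * cnj (h u) * E2 s \<omega> \<partial>lborel \<partial>lborel)"
    unfolding acorr_def by simp
  also have "\<dots> = (\<integral>u. \<integral>s. h (u + s) * cnj (h u) * E2 s \<omega> \<partial>lborel \<partial>lborel)"
    using lborel_pair.Fubini_integral[of "\<lambda>u s. h (u + s) * cnj (h u) * E2 s \<omega>"] int by simp
  also have "\<dots> = (\<integral>u. cnj (h u * E2 u \<omega>) * (\<integral>t. h t * E2 t \<omega> \<partial>lborel) \<partial>lborel)"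
  proof (rule Bochner_Integration.integral_cong[OF refl])
    fix u
    have "(\<integral>s. h (u + s) * cnj (h u) * E2 s \<omega> \<partial>lborel) = (\<integral>s. (h (u + s) * E2 (u + s) \<omega>) * (cnj (h u * E2 u \<omega>)) \<partial>lborel)"
    proof (rule Bochner_Integration.integral_cong[OF refl])
      fix s
      have "E2 s \<omega> = E2 (u + s) \<omega> * cnj (E2 u \<omega>)"
        by (simp add: cnj_E2 E2_add[symmetric])
      then show "h (u + s) * cnj (h u) * E2 s \<omega> = (h (u + s) * E2 (u + s) \<omega>) * (cnj (h u * E2 u \<omega>))"
        by simp
    qed
    also have "\<dots> = (\<integral>s. h (u + s) * E2 (u + s) \<omega> \<partial>lborel) * (cnj (h u * E2 u \<omega>))" by simp
    also have "(\<integral>s. h (u + s) * E2 (u + s) \<omega> \<partial>lborel) = (\<integral>t. h t * E2 t \<omega> \<partial>lborel)"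
      by (rule integral_shift(1)[of "\<lambda>t. h t * E2 t \<omega>"])
    finally show "(\<integral>s. h (u + s) * cnj (h u) * E2 s \<omega> \<partial>lborel) = cnj (h u * E2 u \<omega>) * (\<integral>t. h t * E2 t \<omega> \<partial>lborel)"
      by simp
  qed
  also have "\<dots> = (\<integral>u. cnj (h u * E2 u \<omega>) \<partial>lborel) * (\<integral>t. h t * E2 t \<omega> \<partial>lborel)"
    by (rule integral_mult_left_zero)
  also have "\<dots> = (\<integral>t. h t * E2 t \<omega> \<partial>lborel) * cnj (\<integral>t. h t * E2 t \<omega> \<partial>lborel)"
    by (simp only: Bochner_Integration.integral_cnj mult.commute)
  finally show ?thesis .
qed

lemma conv_fourier:
  fixes F \<Phi> :: "real \<Rightarrow> complex"
  assumes F: "integrable lborel F" and P: "integrable lborel \<Phi>"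
  shows "integrable (lborel \<Otimes>\<^sub>M lborel) (\<lambda>(u, x). F u * \<Phi> (u - x))"
    and "(\<integral>x. (\<integral>u. F u * \<Phi> (u - x) \<partial>lborel) * cnj (E2 x \<eta>) \<partial>lborel)
      = (\<integral>u. F u * cnj (E2 u \<eta>) \<partial>lborel) * (\<integral>y. \<Phi> y * E2 y \<eta> \<partial>lborel)"
proof -
  have [measurable]: "F \<in> borel_measurable borel" "\<Phi> \<in> borel_measurable borel" using F P by auto
  show int0: "integrable (lborel \<Otimes>\<^sub>M lborel) (\<lambda>(u, x). F u * \<Phi> (u - x))"
  proof (rule lborel_pair.Fubini_integrable)
    show "(\<lambda>(u, x). F u * \<Phi> (u - x)) \<in> borel_measurable (lborel \<Otimes>\<^sub>M lborel)" by measurable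
    have "(\<integral>x. norm (case (u, x) of (u, x) \<Rightarrow> F u * \<Phi> (u - x)) \<partial>lborel) = norm (F u) * (\<integral>s. norm (\<Phi> s) \<partial>lborel)" for u
    proof -
      have "(\<integral>x. norm (case (u, x) of (u, x) \<Rightarrow> F u * \<Phi> (u - x)) \<partial>lborel) = (\<integral>x. norm (\<Phi> (u - x)) * norm (F u) \<partial>lborel)"
        by (simp add: norm_mult mult.commute)
      also have "\<dots> = (\<integral>x. norm (\<Phi> (u - x)) \<partial>lborel) * norm (F u)" by simp
      also have "(\<integral>x. norm (\<Phi> (u - x)) \<partial>lborel) = (\<integral>s. norm (\<Phi> s) \<partial>lborel)"
        using integral_shift_real(2)[of "\<lambda>s. norm (\<Phi> s)" u] by simp
      finally show ?thesis by simp
    qed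
    then show "integrable lborel (\<lambda>u. \<integral>x. norm (case (u, x) of (u, x) \<Rightarrow> F u * \<Phi> (u - x)) \<partial>lborel)"
      using F by (simp del: norm_mult)
    show "AE u in lborel. integrable lborel (\<lambda>x. case (u, x) of (u, x) \<Rightarrow> F u * \<Phi> (u - x))"
      using integrable_shift(2)[OF P] by simp
  qed
  have int: "integrable (lborel \<Otimes>\<^sub>M lborel) (\<lambda>(u, x). F u * \<Phi> (u - x) * cnj (E2 x \<eta>))"
    by (rule Bochner_Integration.integrable_bound[OF int0]) (auto simp: norm_mult)
  have "(\<integral>x. (\<integral>u. F u * \<Phi> (u - x) \<partial>lborel) * cnj (E2 x \<eta>) \<partial>lborel)
      = (\<integral>x. \<integral>u. F u * \<Phi> (u - x) * cnj (E2 x \<eta>) \<partial>lborel \<partial>lborel)"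
    by simp
  also have "\<dots> = (\<integral>u. \<integral>x. F u * \<Phi> (u - x) * cnj (E2 x \<eta>) \<partial>lborel \<partial>lborel)"
    using lborel_pair.Fubini_integral[of "\<lambda>u x. F u * \<Phi> (u - x) * cnj (E2 x \<eta>)"] int by simp
  also have "\<dots> = (\<integral>u. F u * cnj (E2 u \<eta>) * (\<integral>y. \<Phi> y * E2 y \<eta> \<partial>lborel) \<partial>lborel)"
  proof (rule Bochner_Integration.integral_cong[OF refl])
    fix u
    have "(\<integral>x. F u * \<Phi> (u - x) * cnj (E2 x \<eta>) \<partial>lborel) = (\<integral>x. (F u * cnj (E2 u \<eta>)) * (\<Phi> (u - x) * E2 (u - x) \<eta>) \<partial>lborel)"
    proof (rule Bochner_Integration.integral_cong[OF refl])
      fix x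
      have "cnj (E2 x \<eta>) = cnj (E2 u \<eta>) * E2 (u - x) \<eta>"
        by (simp add: cnj_E2 E2_add[symmetric])
      then show "F u * \<Phi> (u - x) * cnj (E2 x \<eta>) = (F u * cnj (E2 u \<eta>)) * (\<Phi> (u - x) * E2 (u - x) \<eta>)"
        by simp
    qed
    also have "\<dots> = (F u * cnj (E2 u \<eta>)) * (\<integral>x. \<Phi> (u - x) * E2 (u - x) \<eta> \<partial>lborel)" by simp
    also have "(\<integral>x. \<Phi> (u - x) * E2 (u - x) \<eta> \<partial>lborel) = (\<integral>y. \<Phi> y * E2 y \<eta> \<partial>lborel)"
      by (rule integral_shift(2)[of "\<lambda>t. \<Phi> t * E2 t \<eta>"])
    finally show "(\<integral>x. F u * \<Phi> (u - x) * cnj (E2 x \<eta>) \<partial>lborel) = F u * cnj (E2 u \<eta>) * (\<integral>y. \<Phi> y * E2 y \<eta> \<partial>lborel)"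
      by simp
  qed
  also have "\<dots> = (\<integral>u. F u * cnj (E2 u \<eta>) \<partial>lborel) * (\<integral>y. \<Phi> y * E2 y \<eta> \<partial>lborel)" by simp
  finally show "(\<integral>x. (\<integral>u. F u * \<Phi> (u - x) \<partial>lborel) * cnj (E2 x \<eta>) \<partial>lborel)
      = (\<integral>u. F u * cnj (E2 u \<eta>) \<partial>lborel) * (\<integral>y. \<Phi> y * E2 y \<eta> \<partial>lborel)" .
qed

lemma isCont_fourier:
  fixes \<Phi> :: "real \<Rightarrow> complex"
  assumes P: "integrable lborel \<Phi>"
  shows "isCont (\<lambda>\<eta>. \<integral>y. \<Phi> y * E2 y \<eta> \<partial>lborel) \<eta>0"
  unfolding continuous_at_sequentially
proof safe
  have [measurable]: "\<Phi> \<in> borel_measurable borel" using P by auto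
  fix X assume X: "X \<longlonglongrightarrow> \<eta>0"
  have c: "continuous_on UNIV (\<lambda>\<eta>. E2 y \<eta>)" for y
    unfolding E2_def by (intro continuous_intros)
  show "((\<lambda>\<eta>. \<integral>y. \<Phi> y * E2 y \<eta> \<partial>lborel) \<circ> X) \<longlonglongrightarrow> (\<integral>y. \<Phi> y * E2 y \<eta>0 \<partial>lborel)"
    unfolding comp_def
    by (rule integral_dominated_convergence[where w="\<lambda>y. norm (\<Phi> y)"])
       (use P in \<open>auto simp: norm_mult intro!: tendsto_intros X continuous_on_tendsto_compose[OF c]\<close>)
qed



lemma fourier_entire:
  fixes k :: "real \<Rightarrow> complex"
  assumes k: "integrable lborel k" and B: "B \<ge> 0"
    and supp: "AE u in lborel. B < \<bar>u\<bar> \<longrightarrow> k u = 0"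
    and d: "\<delta> > 0" and Z: "\<And>\<eta>. \<bar>\<eta>\<bar> < \<delta> \<Longrightarrow> (\<integral>u. k u * E2 u \<eta> \<partial>lborel) = 0"
  shows "(\<integral>u. k u * E2 u \<eta> \<partial>lborel) = 0"
proof -
  have km[measurable]: "k \<in> borel_measurable borel" using k by auto
  define w where "w = (\<lambda>u z. - 2 * pi * \<i> * complex_of_real u * z)"
  define c where "c = (\<lambda>n. \<integral>u. k u * ((- 2 * pi * \<i> * complex_of_real u) ^ n /\<^sub>R fact n) \<partial>lborel)"
  define G where "G = (\<lambda>z. \<integral>u. k u * exp (w u z) \<partial>lborel)"
  have sums: "(\<lambda>n. c n * z ^ n) sums G z" for z
  proof -
    define f where "f = (\<lambda>n u. k u * ((w u z) ^ n /\<^sub>R fact n))"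
    define r where "r = 2 * pi * B * norm z"
    have r0: "r \<ge> 0" unfolding r_def using B by simp
    have nw: "norm (w u z) = 2 * pi * \<bar>u\<bar> * norm z" for u
      unfolding w_def by (simp add: norm_mult)
    have fm[measurable]: "f n \<in> borel_measurable borel" for n unfolding f_def w_def by measurable
    have bnd: "AE u in lborel. norm (f n u) \<le> norm (k u) * (r ^ n / fact n)" for n
      using supp
    proof eventually_elim
      case (elim u)
      show ?case
      proof (cases "B < \<bar>u\<bar>")
        case True then show ?thesis using elim by (simp add: f_def)
      next
        case False
        then have "norm (w u z) \<le> r" unfolding nw r_def
          by (intro mult_right_mono mult_left_mono) auto
        then have "norm (w u z) ^ n \<le> r ^ n" by (intro power_mono) auto
        then have *: "norm (k u) * norm (w u z) ^ n / fact n \<le> norm (k u) * r ^ n / fact n"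
          by (intro divide_right_mono mult_left_mono) auto
        have eq: "norm (f n u) = norm (k u) * norm (w u z) ^ n / fact n"
          unfolding f_def by (simp add: norm_mult norm_power divide_inverse mult_ac)
        show ?thesis using * unfolding eq by simp
      qed
    qed
    have fi: "integrable lborel (f n)" for n
    proof (rule Bochner_Integration.integrable_bound[where f="\<lambda>u. norm (k u) * (r ^ n / fact n)"])
      show "integrable lborel (\<lambda>u. norm (k u) * (r ^ n / fact n))" using k by simp
      show "f n \<in> borel_measurable lborel" by simp
      show "AE u in lborel. norm (f n u) \<le> norm (norm (k u) * (r ^ n / fact n))"
        using bnd[of n] by eventually_elim (use r0 in simp)
    qed
    have "(\<lambda>n. integral\<^sup>L lborel (f n)) sums (\<integral>u. (\<Sum>n. f n u) \<partial>lborel)"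
    proof (rule sums_integral[OF fi])
      show "AE u in lborel. summable (\<lambda>n. norm (f n u))"
      proof (rule AE_I2)
        fix u
        have "summable (\<lambda>n. norm (k u) * (norm (w u z) ^ n /\<^sub>R fact n))"
          by (intro summable_mult summable_exp_generic)
        then show "summable (\<lambda>n. norm (f n u))"
          by (simp add: f_def norm_mult norm_power divide_inverse mult_ac)
      qed
      show "summable (\<lambda>n. \<integral>u. norm (f n u) \<partial>lborel)"
      proof (rule summable_comparison_test')
        show "summable (\<lambda>n. (\<integral>u. norm (k u) \<partial>lborel) * (r ^ n /\<^sub>R fact n))"
          by (intro summable_mult summable_exp_generic)
        fix n :: nat
        have "(\<integral>u. norm (f n u) \<partial>lborel) \<le> (\<integral>u. norm (k u) * (r ^ n / fact n) \<partial>lborel)"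
          by (rule integral_mono_AE) (use k fi bnd in auto)
        also have "\<dots> = (\<integral>u. norm (k u) \<partial>lborel) * (r ^ n /\<^sub>R fact n)"
          by (simp add: divide_inverse)
        finally show "norm (\<integral>u. norm (f n u) \<partial>lborel) \<le> (\<integral>u. norm (k u) \<partial>lborel) * (r ^ n /\<^sub>R fact n)"
          by simp
      qed
    qed
    moreover have "(\<Sum>n. f n u) = k u * exp (w u z)" for u
    proof -
      have "(\<lambda>n. f n u) sums (k u * exp (w u z))"
        unfolding f_def by (intro sums_mult exp_converges)
      then show ?thesis by (rule sums_unique[symmetric])
    qed
    moreover have "integral\<^sup>L lborel (f n) = c n * z ^ n" for n
    proof -
      have "integral\<^sup>L lborel (f n) = (\<integral>u. k u * ((- 2 * pi * \<i> * complex_of_real u) ^ n /\<^sub>R fact n) * z ^ n \<partial>lborel)"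
      proof (rule Bochner_Integration.integral_cong[OF refl])
        fix u
        have "w u z ^ n = (- 2 * pi * \<i> * complex_of_real u) ^ n * z ^ n"
          by (simp only: w_def power_mult_distrib)
        then show "f n u = k u * ((- 2 * pi * \<i> * complex_of_real u) ^ n /\<^sub>R fact n) * z ^ n"
          unfolding f_def by (simp add: scaleR_conv_of_real mult_ac)
      qed
      then show ?thesis unfolding c_def by simp
    qed
    ultimately show ?thesis unfolding G_def by simp
  qed
  define S where "S = (\<lambda>z. \<Sum>n. c n * z ^ n)"
  have SG: "S z = G z" for z unfolding S_def using sums[of z] by (simp add: sums_iff)
  have hol: "S holomorphic_on UNIV"
  proof -
    have "\<And>y. summable (\<lambda>n. c n * y ^ n)" using sums by (auto simp: sums_iff)
    from termdiffs_strong_converges_everywhere[OF this]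
    show ?thesis unfolding S_def holomorphic_on_def field_differentiable_def
      by (auto intro: has_field_derivative_at_within)
  qed
  have GE: "G (complex_of_real t) = (\<integral>u. k u * E2 u t \<partial>lborel)" for t
    unfolding G_def w_def E2_def by (simp add: algebra_simps)
  have "S (complex_of_real \<eta>) = 0"
  proof (rule analytic_continuation[OF hol open_UNIV connected_UNIV, where U="complex_of_real ` {-\<delta><..<\<delta>}" and \<xi>=0])
    show "0 islimpt complex_of_real ` {-\<delta><..<\<delta>}"
      unfolding islimpt_approachable
    proof (intro allI impI)
      fix e :: real assume e: "e > 0"
      define t where "t = min \<delta> e / 2"
      have t: "t > 0" "t < \<delta>" "t < e" using e d unfolding t_def by auto
      show "\<exists>x'\<in>complex_of_real ` {-\<delta><..<\<delta>}. x' \<noteq> 0 \<and> dist x' 0 < e"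
        by (rule bexI[of _ "complex_of_real t"]) (use t in auto)
    qed
    fix z assume "z \<in> complex_of_real ` {-\<delta><..<\<delta>}"
    then obtain t where "z = complex_of_real t" "\<bar>t\<bar> < \<delta>" by auto
    then show "S z = 0" using Z[of t] by (simp add: SG GE)
  qed auto
  then show ?thesis by (simp add: SG GE)
qed



lemma L2_meas[measurable_dest]: "L2 a \<Longrightarrow> a \<in> borel_measurable borel"
  unfolding L2_def by auto

lemma L2_prod_integrable:
  assumes "L2 a" "L2 b" shows "integrable lborel (\<lambda>t. a t * b t)"
proof -
  have [measurable]: "a \<in> borel_measurable borel" "b \<in> borel_measurable borel"
    using assms unfolding L2_def by auto
  show ?thesis
  proof (rule Bochner_Integration.integrable_bound[where f="\<lambda>t. (cmod (a t))\<^sup>2 + (cmod (b t))\<^sup>2"])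
    show "integrable lborel (\<lambda>t. (cmod (a t))\<^sup>2 + (cmod (b t))\<^sup>2)"
      using assms unfolding L2_def by auto
    show "(\<lambda>t. a t * b t) \<in> borel_measurable lborel" by measurable
    show "AE t in lborel. norm (a t * b t) \<le> norm ((cmod (a t))\<^sup>2 + (cmod (b t))\<^sup>2)"
    proof (rule AE_I2)
      fix t
      define x where "x = cmod (a t)"
      define y where "y = cmod (b t)"
      have "x \<ge> 0" "y \<ge> 0" unfolding x_def y_def by auto
      then have "0 \<le> x * y" by simp
      moreover have "0 \<le> (x - y)\<^sup>2" by simp
      moreover have "(x - y)\<^sup>2 = x\<^sup>2 - 2 * (x * y) + y\<^sup>2" by (simp add: power2_diff)
      ultimately have "x * y \<le> x\<^sup>2 + y\<^sup>2" by linarith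
      then show "norm (a t * b t) \<le> norm ((cmod (a t))\<^sup>2 + (cmod (b t))\<^sup>2)"
        unfolding x_def y_def by (simp add: norm_mult)
    qed
  qed
qed

lemma L2_shift: assumes "L2 a" shows "L2 (\<lambda>t. a (t + c))"
proof -
  have [measurable]: "a \<in> borel_measurable borel" using assms unfolding L2_def by auto
  have "integrable lborel (\<lambda>t. (cmod (a t))\<^sup>2)" using assms unfolding L2_def by auto
  from lborel_integrable_real_affine[OF this, of 1 c]
  have "integrable lborel (\<lambda>t. (cmod (a (t + c)))\<^sup>2)" by (simp add: add.commute)
  then show ?thesis unfolding L2_def by auto
qed

lemma L2_cnj: assumes "L2 a" shows "L2 (\<lambda>t. cnj (a t))"
  using assms unfolding L2_def by auto

lemma ex_point:
  assumes "AE u in lborel. P u" "\<not> (AE u in lborel. Q u)"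
  shows "\<exists>u. P u \<and> \<not> Q u"
  using assms eventually_mono by blast

lemma phase_from_products:
  fixes f g :: "real \<Rightarrow> complex"
  assumes H: "AE u in lborel. AE t in lborel. f t * cnj (f u) = g t * cnj (g u)"
  shows "\<exists>\<alpha>::real. AE t in lborel. f t = exp (\<i> * complex_of_real \<alpha>) * g t"
proof (cases "AE t in lborel. g t = 0")
  case True
  have "AE t in lborel. f t = 0"
  proof (rule ccontr)
    assume "\<not> (AE t in lborel. f t = 0)"
    from ex_point[OF H this] obtain u where u: "AE t in lborel. f t * cnj (f u) = g t * cnj (g u)" "f u \<noteq> 0"
      by blast
    have "AE t in lborel. f t = 0" using u(1) True
      by eventually_elim (use u(2) in auto)
    with \<open>\<not> (AE t in lborel. f t = 0)\<close> show False by simp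
  qed
  then have "AE t in lborel. f t = exp (\<i> * complex_of_real 0) * g t"
    using True by eventually_elim simp
  then show ?thesis by blast
next
  case False
  from ex_point[OF H False] obtain u0 where u0: "AE t in lborel. f t * cnj (f u0) = g t * cnj (g u0)" "g u0 \<noteq> 0"
    by blast
  have fu0: "f u0 \<noteq> 0"
  proof
    assume "f u0 = 0"
    have "AE t in lborel. g t = 0" using u0(1) by eventually_elim (use \<open>f u0 = 0\<close> u0(2) in auto)
    with False show False by simp
  qed
  define c where "c = cnj (g u0) / cnj (f u0)"
  have fc: "AE t in lborel. f t = c * g t"
    using u0(1) by eventually_elim (use fu0 in \<open>auto simp: c_def field_simps\<close>)
  have "AE u in lborel. (AE t in lborel. f t * cnj (f u) = g t * cnj (g u)) \<and> f u = c * g u"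
    using H fc by eventually_elim auto
  from ex_point[OF this False] obtain u1 where
    u1: "AE t in lborel. f t * cnj (f u1) = g t * cnj (g u1)" "f u1 = c * g u1" "g u1 \<noteq> 0"
    by blast
  have "AE t in lborel. f t * cnj (f u1) = g t * cnj (g u1) \<and> f t = c * g t"
    using u1(1) fc by eventually_elim auto
  from ex_point[OF this False] obtain t1 where
    t1: "f t1 * cnj (f u1) = g t1 * cnj (g u1)" "f t1 = c * g t1" "g t1 \<noteq> 0"
    by blast
  have "(c * cnj c) * (g t1 * cnj (g u1)) = 1 * (g t1 * cnj (g u1))"
    using t1 u1(2) by (simp add: mult_ac)
  then have cc: "c * cnj c = 1" using t1(3) u1(3) by (subst (asm) mult_cancel_right) auto
  have "complex_of_real ((cmod c)\<^sup>2) = 1" using cc by (simp only: complex_norm_square)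
  then have "(cmod c)\<^sup>2 = 1" by (simp only: of_real_eq_1_iff)
  then have "cmod c = 1" using norm_ge_zero[of c] by (auto simp: power2_eq_1_iff)
  then have "c = exp (\<i> * complex_of_real (Arg c))"
    using Arg_eq[of c] by (cases "c = 0") auto
  then have "AE t in lborel. f t = exp (\<i> * complex_of_real (Arg c)) * g t"
    using fc by simp
  then show ?thesis by blast
qed

lemma integrable_E2:
  fixes h :: "real \<Rightarrow> complex"
  assumes "integrable lborel h"
  shows "integrable lborel (\<lambda>t. h t * E2 t \<omega>)"
  by (rule Bochner_Integration.integrable_bound[OF assms]) (use assms in \<open>auto simp: norm_mult\<close>)

lemma isCont_nonzero_nbhd:
  fixes P :: "real \<Rightarrow> complex"
  assumes "isCont P 0" "P 0 \<noteq> 0"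
  obtains \<delta> where "\<delta> > 0" "\<And>\<eta>. \<bar>\<eta>\<bar> < \<delta> \<Longrightarrow> P \<eta> \<noteq> 0"
proof -
  have "eventually (\<lambda>z. P z \<noteq> 0) (at 0)"
    using assms unfolding isCont_def by (rule tendsto_imp_eventually_ne)
  then obtain d where d: "d > 0" "\<And>z. z \<noteq> 0 \<Longrightarrow> dist z 0 < d \<Longrightarrow> P z \<noteq> 0"
    unfolding eventually_at by blast
  show ?thesis
  proof (rule that[OF d(1)])
    fix \<eta> :: real assume "\<bar>\<eta>\<bar> < d"
    then show "P \<eta> \<noteq> 0" using d(2)[of \<eta>] assms(2) by (cases "\<eta> = 0") auto
  qed
qed

theorem mainTheorem11:
  fixes B :: real and \<phi> f g :: "real \<Rightarrow> complex"
  assumes "B > 0"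
    and "L2 \<phi>"
    and "\<forall>x\<in>{-2*B..2*B}. ambiguity \<phi> x 0 \<noteq> 0"
    and "L2 f" and "L2 g"
    and "AE t in lborel. t \<notin> {-B..B} \<longrightarrow> f t = 0"
    and "AE t in lborel. t \<notin> {-B..B} \<longrightarrow> g t = 0"
  shows "(\<exists>\<alpha>::real. AE t in lborel. f t = exp (\<i> * complex_of_real \<alpha>) * g t)
     \<longleftrightarrow> (\<forall>x \<omega>. cmod (STFT \<phi> f x \<omega>) = cmod (STFT \<phi> g x \<omega>))"
proof -
  have fm[measurable]: "f \<in> borel_measurable borel" using assms(4) unfolding L2_def by auto
  have gm[measurable]: "g \<in> borel_measurable borel" using assms(5) unfolding L2_def by auto
  have pm[measurable]: "\<phi> \<in> borel_measurable borel" using assms(2) unfolding L2_def by auto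
  show ?thesis
  proof
    assume "\<exists>\<alpha>::real. AE t in lborel. f t = exp (\<i> * complex_of_real \<alpha>) * g t"
    then obtain \<alpha> :: real where a: "AE t in lborel. f t = exp (\<i> * complex_of_real \<alpha>) * g t" by blast
    show "\<forall>x \<omega>. cmod (STFT \<phi> f x \<omega>) = cmod (STFT \<phi> g x \<omega>)"
    proof (intro allI)
      fix x \<omega>
      have ae: "AE t in lborel. f t * cnj (\<phi> (t - x)) * exp (- 2 * pi * \<i> * complex_of_real (t * \<omega>))
          = exp (\<i> * complex_of_real \<alpha>) * (g t * cnj (\<phi> (t - x)) * exp (- 2 * pi * \<i> * complex_of_real (t * \<omega>)))"
        using a by eventually_elim simp
      have "STFT \<phi> f x \<omega> = (\<integral>t. exp (\<i> * complex_of_real \<alpha>) * (g t * cnj (\<phi> (t - x)) * exp (- 2 * pi * \<i> * complex_of_real (t * \<omega>))) \<partial>lborel)"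
        unfolding STFT_def by (rule integral_cong_AE) (measurable, measurable, fact ae)
      also have "\<dots> = exp (\<i> * complex_of_real \<alpha>) * STFT \<phi> g x \<omega>"
        unfolding STFT_def by (rule integral_mult_right_zero)
      finally show "cmod (STFT \<phi> f x \<omega>) = cmod (STFT \<phi> g x \<omega>)"
        by (simp add: norm_mult norm_exp_i_times)
    qed
  next
    assume H: "\<forall>x \<omega>. cmod (STFT \<phi> f x \<omega>) = cmod (STFT \<phi> g x \<omega>)"
    have L2ps: "L2 (\<lambda>t. cnj (\<phi> (t - x)))" for x
      using L2_cnj[OF L2_shift[OF assms(2), of "-x"]] by simp
    define hf where "hf = (\<lambda>x u. f u * cnj (\<phi> (u - x)))"
    define hg where "hg = (\<lambda>x u. g u * cnj (\<phi> (u - x)))"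
    have hfi: "integrable lborel (hf x)" for x
      unfolding hf_def by (rule L2_prod_integrable[OF assms(4) L2ps])
    have hgi: "integrable lborel (hg x)" for x
      unfolding hg_def by (rule L2_prod_integrable[OF assms(5) L2ps])
    have STf: "STFT \<phi> f x \<omega> = (\<integral>t. hf x t * E2 t \<omega> \<partial>lborel)" for x \<omega>
      unfolding STFT_def hf_def E2_def by (simp add: mult.assoc)
    have STg: "STFT \<phi> g x \<omega> = (\<integral>t. hg x t * E2 t \<omega> \<partial>lborel)" for x \<omega>
      unfolding STFT_def hg_def E2_def by (simp add: mult.assoc)
    have A: "AE s in lborel. acorr (hf x) s = acorr (hg x) s" for x
    proof -
      define k where "k = (\<lambda>s. acorr (hf x) s - acorr (hg x) s)"
      have ki: "integrable lborel k" unfolding k_def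
        using acorr_integrable[OF hfi] acorr_integrable[OF hgi] by auto
      have "(\<integral>s. k s * E2 s \<omega> \<partial>lborel) = 0" for \<omega>
      proof -
        have "(\<integral>s. k s * E2 s \<omega> \<partial>lborel) = (\<integral>s. acorr (hf x) s * E2 s \<omega> - acorr (hg x) s * E2 s \<omega> \<partial>lborel)"
          unfolding k_def by (simp add: left_diff_distrib)
        also have "\<dots> = (\<integral>s. acorr (hf x) s * E2 s \<omega> \<partial>lborel) - (\<integral>s. acorr (hg x) s * E2 s \<omega> \<partial>lborel)"
          by (rule Bochner_Integration.integral_diff[OF integrable_E2[OF acorr_integrable[OF hfi]] integrable_E2[OF acorr_integrable[OF hgi]]])
        also have "\<dots> = complex_of_real ((cmod (STFT \<phi> f x \<omega>))\<^sup>2) - complex_of_real ((cmod (STFT \<phi> g x \<omega>))\<^sup>2)"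
          unfolding acorr_fourier[OF hfi] acorr_fourier[OF hgi] STf STg complex_norm_square by simp
        also have "\<dots> = 0" using H by simp
        finally show ?thesis .
      qed
      from fourier_unique_E2[OF ki this] show ?thesis unfolding k_def by eventually_elim simp
    qed
    have Rm[measurable]: "(\<lambda>(x, s). acorr (hf x) s) \<in> borel_measurable (lborel \<Otimes>\<^sub>M lborel)"
      "(\<lambda>(x, s). acorr (hg x) s) \<in> borel_measurable (lborel \<Otimes>\<^sub>M lborel)"
      unfolding acorr_def hf_def hg_def by measurable
    have "AE x in lborel. AE s in lborel. acorr (hf x) s = acorr (hg x) s"
      by (rule AE_I2) (rule A)
    moreover have S1: "{p \<in> space (lborel \<Otimes>\<^sub>M lborel). acorr (hf (fst p)) (snd p) = acorr (hg (fst p)) (snd p)} \<in> sets (lborel \<Otimes>\<^sub>M lborel)"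
    proof -
      have [measurable]: "(\<lambda>p. acorr (hf (fst p)) (snd p)) \<in> borel_measurable (lborel \<Otimes>\<^sub>M lborel)"
        "(\<lambda>p. acorr (hg (fst p)) (snd p)) \<in> borel_measurable (lborel \<Otimes>\<^sub>M lborel)"
        using Rm by (simp_all add: case_prod_unfold)
      show ?thesis by measurable
    qed
    ultimately have B1: "AE s in lborel. AE x in lborel. acorr (hf x) s = acorr (hg x) s"
      using lborel_pair.AE_commute[OF S1] by simp
    define Ff where "Ff = (\<lambda>s u. f (u + s) * cnj (f u))"
    define Fg where "Fg = (\<lambda>s u. g (u + s) * cnj (g u))"
    define Ph where "Ph = (\<lambda>s y. cnj (\<phi> (y + s)) * \<phi> y)"
    have [measurable]: "(\<lambda>(s, u). Ff s u) \<in> borel_measurable (lborel \<Otimes>\<^sub>M lborel)"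
      "(\<lambda>(s, u). Fg s u) \<in> borel_measurable (lborel \<Otimes>\<^sub>M lborel)"
      unfolding Ff_def Fg_def by measurable
    have Ffi: "integrable lborel (Ff s)" for s
      unfolding Ff_def by (rule L2_prod_integrable[OF L2_shift[OF assms(4)] L2_cnj[OF assms(4)]])
    have Fgi: "integrable lborel (Fg s)" for s
      unfolding Fg_def by (rule L2_prod_integrable[OF L2_shift[OF assms(5)] L2_cnj[OF assms(5)]])
    have Phi: "integrable lborel (Ph s)" for s
      unfolding Ph_def by (rule L2_prod_integrable[OF L2_cnj[OF L2_shift[OF assms(2)]] assms(2)])
    have RfF: "acorr (hf x) s = (\<integral>u. Ff s u * Ph s (u - x) \<partial>lborel)" for x s
      unfolding acorr_def hf_def Ff_def Ph_def
    proof (rule Bochner_Integration.integral_cong[OF refl])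
      fix u
      have e: "u + s - x = u - x + s" by simp
      show "f (u + s) * cnj (\<phi> (u + s - x)) * cnj (f u * cnj (\<phi> (u - x))) =
          f (u + s) * cnj (f u) * (cnj (\<phi> (u - x + s)) * \<phi> (u - x))"
        by (simp only: e) (simp add: mult_ac)
    qed
    have RgF: "acorr (hg x) s = (\<integral>u. Fg s u * Ph s (u - x) \<partial>lborel)" for x s
      unfolding acorr_def hg_def Fg_def Ph_def
    proof (rule Bochner_Integration.integral_cong[OF refl])
      fix u
      have e: "u + s - x = u - x + s" by simp
      show "g (u + s) * cnj (\<phi> (u + s - x)) * cnj (g u * cnj (\<phi> (u - x))) =
          g (u + s) * cnj (g u) * (cnj (\<phi> (u - x + s)) * \<phi> (u - x))"
        by (simp only: e) (simp add: mult_ac)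
    qed
    have suppf: "AE u in lborel. B < \<bar>u\<bar> \<longrightarrow> f u = 0" using assms(6) by eventually_elim auto
    have suppg: "AE u in lborel. B < \<bar>u\<bar> \<longrightarrow> g u = 0" using assms(7) by eventually_elim auto
    have C: "AE u in lborel. Ff s u = Fg s u" if s: "AE x in lborel. acorr (hf x) s = acorr (hg x) s" for s
    proof -
      have [measurable]: "Ff s \<in> borel_measurable borel" "Fg s \<in> borel_measurable borel" "Ph s \<in> borel_measurable borel"
        unfolding Ff_def Fg_def Ph_def by measurable
      define k where "k = (\<lambda>u. Ff s u - Fg s u)"
      have ki: "integrable lborel k" unfolding k_def using Ffi Fgi by auto
      have ki2: "integrable lborel (\<lambda>u. k u * cnj (E2 u \<eta>))" for \<eta>
        by (rule Bochner_Integration.integrable_bound[OF ki]) (use ki in \<open>auto simp: norm_mult\<close>)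
      have eqn: "(\<integral>u. k u * E2 u \<eta> \<partial>lborel) * (\<integral>y. Ph s y * E2 y (- \<eta>) \<partial>lborel) = 0" for \<eta>
      proof -
        have cE: "cnj (E2 u (- \<eta>)) = E2 u \<eta>" for u by (simp only: cnj_E2) (simp add: E2_def)
        have "(\<integral>x. acorr (hf x) s * cnj (E2 x (- \<eta>)) \<partial>lborel) = (\<integral>x. acorr (hg x) s * cnj (E2 x (- \<eta>)) \<partial>lborel)"
          by (rule integral_cong_AE) (use s in \<open>measurable, measurable, auto elim: eventually_mono\<close>)
        then have "(\<integral>u. Ff s u * cnj (E2 u (- \<eta>)) \<partial>lborel) * (\<integral>y. Ph s y * E2 y (- \<eta>) \<partial>lborel)
            = (\<integral>u. Fg s u * cnj (E2 u (- \<eta>)) \<partial>lborel) * (\<integral>y. Ph s y * E2 y (- \<eta>) \<partial>lborel)"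
          unfolding RfF RgF conv_fourier(2)[OF Ffi Phi] conv_fourier(2)[OF Fgi Phi] .
        moreover have "(\<integral>u. k u * E2 u \<eta> \<partial>lborel) = (\<integral>u. Ff s u * cnj (E2 u (- \<eta>)) \<partial>lborel) - (\<integral>u. Fg s u * cnj (E2 u (- \<eta>)) \<partial>lborel)"
        proof -
          have i1: "integrable lborel (\<lambda>u. Ff s u * E2 u \<eta>)" by (rule integrable_E2[OF Ffi])
          have i2: "integrable lborel (\<lambda>u. Fg s u * E2 u \<eta>)" by (rule integrable_E2[OF Fgi])
          have "(\<integral>u. k u * E2 u \<eta> \<partial>lborel) = (\<integral>u. Ff s u * E2 u \<eta> \<partial>lborel) - (\<integral>u. Fg s u * E2 u \<eta> \<partial>lborel)"
            unfolding k_def left_diff_distrib by (rule Bochner_Integration.integral_diff[OF i1 i2])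
          then show ?thesis by (simp only: cE)
        qed
        ultimately show ?thesis by (simp add: left_diff_distrib)
      qed
      show ?thesis
      proof (cases "\<bar>s\<bar> \<le> 2 * B")
        case True
        have "- s \<in> {-2*B..2*B}" using True by auto
        then have "ambiguity \<phi> (- s) 0 \<noteq> 0" using assms(3) by blast
        moreover have "ambiguity \<phi> (- s) 0 = (\<integral>y. Ph s y * E2 y 0 \<partial>lborel)"
          unfolding ambiguity_def STFT_def Ph_def by (simp add: mult.commute)
        ultimately have P0: "(\<lambda>\<eta>. \<integral>y. Ph s y * E2 y \<eta> \<partial>lborel) 0 \<noteq> 0" by simp
        obtain \<delta> where d: "\<delta> > 0" "\<And>\<eta>. \<bar>\<eta>\<bar> < \<delta> \<Longrightarrow> (\<integral>y. Ph s y * E2 y \<eta> \<partial>lborel) \<noteq> 0"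
          using isCont_nonzero_nbhd[OF isCont_fourier[OF Phi] P0] by blast
        have "(\<integral>u. k u * E2 u \<eta> \<partial>lborel) = 0" for \<eta>
        proof (rule fourier_entire[OF ki less_imp_le[OF assms(1)] _ d(1)])
          show "AE u in lborel. B < \<bar>u\<bar> \<longrightarrow> k u = 0"
            using suppf suppg by eventually_elim (auto simp: k_def Ff_def Fg_def)
          fix \<eta> :: real assume "\<bar>\<eta>\<bar> < \<delta>"
          then have "(\<integral>y. Ph s y * E2 y (- \<eta>) \<partial>lborel) \<noteq> 0" using d(2)[of "- \<eta>"] by simp
          then show "(\<integral>u. k u * E2 u \<eta> \<partial>lborel) = 0" using eqn[of \<eta>] by simp
        qed
        from fourier_unique_E2[OF ki this] show ?thesis unfolding k_def by eventually_elim simp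
      next
        case False
        have pf: "Measurable.pred borel (\<lambda>t. B < \<bar>t\<bar> \<longrightarrow> f t = 0)" by measurable
        have pg: "Measurable.pred borel (\<lambda>t. B < \<bar>t\<bar> \<longrightarrow> g t = 0)" by measurable
        have sf: "AE u in lborel. B < \<bar>s + 1 * u\<bar> \<longrightarrow> f (s + 1 * u) = 0"
          by (rule AE_borel_affine[OF _ pf suppf]) simp
        have sg: "AE u in lborel. B < \<bar>s + 1 * u\<bar> \<longrightarrow> g (s + 1 * u) = 0"
          by (rule AE_borel_affine[OF _ pg suppg]) simp
        show ?thesis using suppf suppg sf sg
        proof eventually_elim
          case (elim u)
          show ?case
          proof (cases "B < \<bar>u\<bar>")
            case True then show ?thesis using elim by (simp add: Ff_def Fg_def)
          next
            case False
            then have "B < \<bar>s + 1 * u\<bar>" using \<open>\<not> \<bar>s\<bar> \<le> 2 * B\<close> by linarith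
            then show ?thesis using elim by (simp add: Ff_def Fg_def add.commute)
          qed
        qed
      qed
    qed
    have "AE s in lborel. AE u in lborel. Ff s u = Fg s u"
      using B1 by eventually_elim (rule C)
    moreover have S2: "{p \<in> space (lborel \<Otimes>\<^sub>M lborel). Ff (fst p) (snd p) = Fg (fst p) (snd p)} \<in> sets (lborel \<Otimes>\<^sub>M lborel)"
    proof -
      have [measurable]: "(\<lambda>p. Ff (fst p) (snd p)) \<in> borel_measurable (lborel \<Otimes>\<^sub>M lborel)"
        "(\<lambda>p. Fg (fst p) (snd p)) \<in> borel_measurable (lborel \<Otimes>\<^sub>M lborel)"
        unfolding Ff_def Fg_def by measurable
      show ?thesis by measurable
    qed
    ultimately have "AE u in lborel. AE s in lborel. Ff s u = Fg s u"
      using lborel_pair.AE_commute[OF S2] by simp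
    then have "AE u in lborel. AE t in lborel. f t * cnj (f u) = g t * cnj (g u)"
    proof eventually_elim
      case (elim u)
      have pu: "Measurable.pred borel (\<lambda>s. Ff s u = Fg s u)" unfolding Ff_def Fg_def by measurable
      have "AE x in lborel. Ff (- u + 1 * x) u = Fg (- u + 1 * x) u"
        by (rule AE_borel_affine[OF _ pu elim]) simp
      then show ?case by eventually_elim (simp add: Ff_def Fg_def)
    qed
    then show "\<exists>\<alpha>::real. AE t in lborel. f t = exp (\<i> * complex_of_real \<alpha>) * g t"
      by (rule phase_from_products)
  qed
qed


end
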